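(* Let $(\mathfrak H_{-,+},\mathfrak H,\Gamma_0,\Gamma_1)$ be an m-boundary tuple for $\mathcal A^*$, where $\mathcal A$ is a closed densely defined symmetric operator in a Hilbert space $\mathfrak X$. Let $V$ be an arbitrary linear homeomorphism from $\mathfrak H$ onto $\mathfrak H_{-,+}$. Then $(\mathfrak H,V^{-1}\Gamma_0,V^\#\Gamma_1)$ is a boundary triple for $\mathcal A^*$.
   Context: Mixed-order duality: Hilbert spaces $\mathfrak H,\mathfrak H_{-,+},\mathfrak H_{+,-}$ with $\widetilde{\mathfrak H}_{\mp,\pm}:=\mathfrak H\cap\mathfrak H_{\mp,\pm}$ dense in $\mathfrak H$ and in $\mathfrak H_{\mp,\pm}$, forms $\|h\|^2_{\mathfrak H_{\mp,\pm}}$ on $\widetilde{\mathfrak H}_{\mp,\pm}$ closed in $\mathfrak H$, and $\|h\|_{\mathfrak H_{\pm,\mp}}=\sup_{0\ne g\in\widetilde{\mathfrak H}_{\mp,\pm}}|(g|h)_{\mathfrak H}|/\|g\|_{\mathfrak H_{\mp,\pm}}$ for $h\in\widetilde{\mathfrak H}_{\pm,\mp}$; $\langle\cdot|\cdot\rangle_{\mathfrak H}$ is the unique bounded sesquilinear extension of $(\cdot|\cdot)_{\mathfrak H}$ to $\mathfrak H_{-,+}\times\mathfrak H_{+,-}$, with $\langle h_{+,-}|h_{-,+}\rangle_{\mathfrak H}:=\overline{\langle h_{-,+}|h_{+,-}\rangle_{\mathfrak H}}$. An m-boundary tuple for $\mathcal A^*$ is $(\mathfrak H_{-,+},\mathfrak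 H,\Gamma_0,\Gamma_1)$ with linear $\Gamma_0:\mathrm{dom}\mathcal A^*\to\mathfrak H_{-,+}$, $\Gamma_1:\mathrm{dom}\mathcal A^*\to\mathfrak H_{+,-}$ such that (M1) $f\mapsto\{\Gamma_0f,\Gamma_1f\}$ maps $\mathrm{dom}\mathcal A^*$ onto $\mathfrak H_{-,+}\oplus\mathfrak H_{+,-}$ and (M2) $(\mathcal A^*f|g)_{\mathfrak X}-(f|\mathcal A^*g)_{\mathfrak X}=\langle\Gamma_1f|\Gamma_0g\rangle_{\mathfrak H}-\langle\Gamma_0f|\Gamma_1g\rangle_{\mathfrak H}$ for all $f,g$. The $\mathfrak H$-pairing-adjoint of $V$ is $V^\#:\mathfrak H_{+,-}\to\mathfrak H$ with $\langle Vf|g\rangle_{\mathfrak H}=(f|V^\#g)_{\mathfrak H}$ for $f\in\mathfrak H$, $g\in\mathfrak H_{+,-}$. A boundary triple $(\mathfrak H,\widehat\Gamma_0,\widehat\Gamma_1)$ for $\mathcal A^*$ consists of linear maps $\widehat\Gamma_j:\mathrm{dom}\mathcal A^*\to\mathfrak H$ such that $f\mapsto\{\widehat\Gamma_0f,\widehat\Gamma_1f\}$ maps $\mathrm{dom}\mathcal A^*$ onto $\mathfrak H\oplus\mathfrak H$ and $(\mathcal A^*f|g)_{\mathfrak X}-(f|\mathcal A^*g)_{\mathfrak X}=(\widehat\Gamma_1f|\widehat\Gamma_0g)_{\mathfrak H}-(\widehat\Gamma_0f|\widehat\Gamma_1g)_{\mathfrak H}$ for all $f,g\in\mathrm{dom}\mathcal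 A^*$. *)

theory Defs
  imports "HOL-Analysis.Analysis"
begin

class cvector = ab_group_add +
  fixes scaleC :: "complex \<Rightarrow> 'a \<Rightarrow> 'a" (infixr \<open>*\<^sub>C\<close> 75)
  assumes scaleC_add_right: "a *\<^sub>C (x + y) = a *\<^sub>C x + a *\<^sub>C y"
    and scaleC_add_left: "(a + b) *\<^sub>C x = a *\<^sub>C x + b *\<^sub>C x"
    and scaleC_scaleC: "a *\<^sub>C (b *\<^sub>C x) = (a * b) *\<^sub>C x"
    and scaleC_one: "1 *\<^sub>C x = x"

text \<open>A (complex) Hilbert space is a linear subspace S of an ambient complex vector space
  together with an inner product ip on S (linear in the first, conjugate linear in the
  second argument) such that S is complete for the induced norm.\<close>

definition csubspace :: "'a::cvector set \<Rightarrow> bool" where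
  "csubspace S \<longleftrightarrow> 0 \<in> S \<and> (\<forall>x\<in>S. \<forall>y\<in>S. x + y \<in> S) \<and> (\<forall>c. \<forall>x\<in>S. c *\<^sub>C x \<in> S)"

definition hnorm :: "('a \<Rightarrow> 'a \<Rightarrow> complex) \<Rightarrow> 'a \<Rightarrow> real" where
  "hnorm ip x = sqrt (Re (ip x x))"

definition inner_product_on :: "'a::cvector set \<Rightarrow> ('a \<Rightarrow> 'a \<Rightarrow> complex) \<Rightarrow> bool" where
  "inner_product_on S ip \<longleftrightarrow> csubspace S
     \<and> (\<forall>x\<in>S. \<forall>y\<in>S. \<forall>z\<in>S. ip (x + y) z = ip x z + ip y z)
     \<and> (\<forall>c. \<forall>x\<in>S. \<forall>y\<in>S. ip (c *\<^sub>C x) y = c * ip x y)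
     \<and> (\<forall>x\<in>S. \<forall>y\<in>S. ip y x = cnj (ip x y))
     \<and> (\<forall>x\<in>S. 0 \<le> Re (ip x x))
     \<and> (\<forall>x\<in>S. ip x x = 0 \<longrightarrow> x = 0)"

definition hcauchy :: "('a::cvector \<Rightarrow> 'a \<Rightarrow> complex) \<Rightarrow> (nat \<Rightarrow> 'a) \<Rightarrow> bool" where
  "hcauchy ip u \<longleftrightarrow> (\<forall>e>0. \<exists>N. \<forall>m\<ge>N. \<forall>n\<ge>N. hnorm ip (u m - u n) < e)"

definition hconverges :: "('a::cvector \<Rightarrow> 'a \<Rightarrow> complex) \<Rightarrow> (nat \<Rightarrow> 'a) \<Rightarrow> 'a \<Rightarrow> bool" where
  "hconverges ip u x \<longleftrightarrow> (\<lambda>n. hnorm ip (u n - x)) \<longlonglongrightarrow> 0"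

definition hilbert_space :: "'a::cvector set \<Rightarrow> ('a \<Rightarrow> 'a \<Rightarrow> complex) \<Rightarrow> bool" where
  "hilbert_space S ip \<longleftrightarrow> inner_product_on S ip
     \<and> (\<forall>u. (\<forall>n. u n \<in> S) \<and> hcauchy ip u \<longrightarrow> (\<exists>x\<in>S. hconverges ip u x))"

definition hdense :: "'a::cvector set \<Rightarrow> ('a \<Rightarrow> 'a \<Rightarrow> complex) \<Rightarrow> 'a set \<Rightarrow> bool" where
  "hdense S ip D \<longleftrightarrow> D \<subseteq> S \<and> (\<forall>x\<in>S. \<forall>e>0. \<exists>d\<in>D. hnorm ip (x - d) < e)"

definition hcontinuous_on ::
  "'a::cvector set \<Rightarrow> ('a \<Rightarrow> 'a \<Rightarrow> complex) \<Rightarrow> ('a \<Rightarrow> 'b::cvector) \<Rightarrow> ('b \<Rightarrow> 'b \<Rightarrow> complex) \<Rightarrow> bool" where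
  "hcontinuous_on S ip1 f ip2 \<longleftrightarrow>
     (\<forall>x\<in>S. \<forall>e>0. \<exists>d>0. \<forall>y\<in>S. hnorm ip1 (y - x) < d \<longrightarrow> hnorm ip2 (f y - f x) < e)"

definition clinear_on :: "'a::cvector set \<Rightarrow> ('a \<Rightarrow> 'b::cvector) \<Rightarrow> bool" where
  "clinear_on S f \<longleftrightarrow> (\<forall>x\<in>S. \<forall>y\<in>S. f (x + y) = f x + f y) \<and> (\<forall>c. \<forall>x\<in>S. f (c *\<^sub>C x) = c *\<^sub>C f x)"

definition linear_homeomorphism ::
  "'a::cvector set \<Rightarrow> ('a \<Rightarrow> 'a \<Rightarrow> complex) \<Rightarrow> 'b::cvector set \<Rightarrow> ('b \<Rightarrow> 'b \<Rightarrow> complex) \<Rightarrow> ('a \<Rightarrow> 'b) \<Rightarrow> bool" where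
  "linear_homeomorphism S ip1 T ip2 V \<longleftrightarrow> clinear_on S V \<and> bij_betw V S T
     \<and> hcontinuous_on S ip1 V ip2 \<and> hcontinuous_on T ip2 (inv_into S V) ip1"

text \<open>The form h \<mapsto> squared ipK-norm of h with domain D (a subset of the Hilbert space (H, ipH))
  is closed in H: whenever u n in D, u n \<rightarrow> h in H and (u n) is Cauchy for the form,
  then h \<in> D and the form of u n - h tends to 0.\<close>
definition closed_norm_form ::
  "'a::cvector set \<Rightarrow> ('a \<Rightarrow> 'a \<Rightarrow> complex) \<Rightarrow> 'a set \<Rightarrow> ('a \<Rightarrow> 'a \<Rightarrow> complex) \<Rightarrow> bool" where
  "closed_norm_form H ipH D ipK \<longleftrightarrow>
     (\<forall>u h. (\<forall>n. u n \<in> D) \<and> h \<in> H \<and> hconverges ipH u h \<and> hcauchy ipK u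
        \<longrightarrow> h \<in> D \<and> hconverges ipK u h)"

text \<open>Norm duality: for h in H \<inter> Hb, the Hb-norm of h equals
  sup over nonzero g in H \<inter> Ha of |(g|h)_H| / \<parallel>g\<parallel>_Ha (with the convention sup of the empty set = 0).\<close>
definition norm_dual ::
  "'a::cvector set \<Rightarrow> ('a \<Rightarrow> 'a \<Rightarrow> complex) \<Rightarrow> 'a set \<Rightarrow> ('a \<Rightarrow> 'a \<Rightarrow> complex) \<Rightarrow> 'a set \<Rightarrow> ('a \<Rightarrow> 'a \<Rightarrow> complex) \<Rightarrow> bool" where
  "norm_dual H ipH Ha ipA Hb ipB \<longleftrightarrow>
     (\<forall>h\<in>H \<inter> Hb.
        bdd_above ((\<lambda>g. cmod (ipH g h) / hnorm ipA g) ` ((H \<inter> Ha) - {0}))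
      \<and> hnorm ipB h = Sup (insert 0 ((\<lambda>g. cmod (ipH g h) / hnorm ipA g) ` ((H \<inter> Ha) - {0}))))"

text \<open>Mixed-order duality of H, Hmp (= H_{-,+}) and Hpm (= H_{+,-}), together with the
  pairing pr = \<langle>\<cdot>|\<cdot>\<rangle>_H on Hmp \<times> Hpm, characterised as the (unique) bounded sesquilinear
  extension of (\<cdot>|\<cdot>)_H from (H \<inter> Hmp) \<times> (H \<inter> Hpm).\<close>
definition mixed_order_duality ::
  "'a::cvector set \<Rightarrow> ('a \<Rightarrow> 'a \<Rightarrow> complex) \<Rightarrow> 'a set \<Rightarrow> ('a \<Rightarrow> 'a \<Rightarrow> complex)
   \<Rightarrow> 'a set \<Rightarrow> ('a \<Rightarrow> 'a \<Rightarrow> complex) \<Rightarrow> ('a \<Rightarrow> 'a \<Rightarrow> complex) \<Rightarrow> bool" where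
  "mixed_order_duality H ipH Hmp ipMP Hpm ipPM pr \<longleftrightarrow>
     hilbert_space H ipH \<and> hilbert_space Hmp ipMP \<and> hilbert_space Hpm ipPM
   \<and> hdense H ipH (H \<inter> Hmp) \<and> hdense Hmp ipMP (H \<inter> Hmp)
   \<and> hdense H ipH (H \<inter> Hpm) \<and> hdense Hpm ipPM (H \<inter> Hpm)
   \<and> closed_norm_form H ipH (H \<inter> Hmp) ipMP \<and> closed_norm_form H ipH (H \<inter> Hpm) ipPM
   \<and> norm_dual H ipH Hmp ipMP Hpm ipPM \<and> norm_dual H ipH Hpm ipPM Hmp ipMP
   \<and> (\<forall>a\<in>Hmp. \<forall>a'\<in>Hmp. \<forall>b\<in>Hpm. pr (a + a') b = pr a b + pr a' b)
   \<and> (\<forall>c. \<forall>a\<in>Hmp. \<forall>b\<in>Hpm. pr (c *\<^sub>C a) b = c * pr a b)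
   \<and> (\<forall>a\<in>Hmp. \<forall>b\<in>Hpm. \<forall>b'\<in>Hpm. pr a (b + b') = pr a b + pr a b')
   \<and> (\<forall>c. \<forall>a\<in>Hmp. \<forall>b\<in>Hpm. pr a (c *\<^sub>C b) = cnj c * pr a b)
   \<and> (\<exists>C. \<forall>a\<in>Hmp. \<forall>b\<in>Hpm. cmod (pr a b) \<le> C * hnorm ipMP a * hnorm ipPM b)
   \<and> (\<forall>a\<in>H \<inter> Hmp. \<forall>b\<in>H \<inter> Hpm. pr a b = ipH a b)"

text \<open>A linear operator in the Hilbert space (X, ipX) is given by its domain D and a map A.\<close>
definition closed_densely_defined_symmetric ::
  "'x::cvector set \<Rightarrow> ('x \<Rightarrow> 'x \<Rightarrow> complex) \<Rightarrow> 'x set \<Rightarrow> ('x \<Rightarrow> 'x) \<Rightarrow> bool" where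
  "closed_densely_defined_symmetric X ipX D A \<longleftrightarrow>
     csubspace D \<and> D \<subseteq> X \<and> A ` D \<subseteq> X \<and> clinear_on D A
   \<and> hdense X ipX D
   \<and> (\<forall>f\<in>D. \<forall>g\<in>D. ipX (A f) g = ipX f (A g))
   \<and> (\<forall>u f h. (\<forall>n. u n \<in> D) \<and> f \<in> X \<and> h \<in> X \<and> hconverges ipX u f
        \<and> hconverges ipX (\<lambda>n. A (u n)) h \<longrightarrow> f \<in> D \<and> A f = h)"

definition adj_dom :: "'x::cvector set \<Rightarrow> ('x \<Rightarrow> 'x \<Rightarrow> complex) \<Rightarrow> 'x set \<Rightarrow> ('x \<Rightarrow> 'x) \<Rightarrow> 'x set" where
  "adj_dom X ipX D A = {g\<in>X. \<exists>h\<in>X. \<forall>f\<in>D. ipX (A f) g = ipX f h}"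

definition adj :: "'x::cvector set \<Rightarrow> ('x \<Rightarrow> 'x \<Rightarrow> complex) \<Rightarrow> 'x set \<Rightarrow> ('x \<Rightarrow> 'x) \<Rightarrow> 'x \<Rightarrow> 'x" where
  "adj X ipX D A g = (THE h. h \<in> X \<and> (\<forall>f\<in>D. ipX (A f) g = ipX f h))"

definition m_boundary_tuple ::
  "'x::cvector set \<Rightarrow> ('x \<Rightarrow> 'x \<Rightarrow> complex) \<Rightarrow> 'x set \<Rightarrow> ('x \<Rightarrow> 'x)
   \<Rightarrow> 'a::cvector set \<Rightarrow> ('a \<Rightarrow> 'a \<Rightarrow> complex) \<Rightarrow> 'a set \<Rightarrow> ('a \<Rightarrow> 'a \<Rightarrow> complex)
   \<Rightarrow> 'a set \<Rightarrow> ('a \<Rightarrow> 'a \<Rightarrow> complex) \<Rightarrow> ('a \<Rightarrow> 'a \<Rightarrow> complex)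
   \<Rightarrow> ('x \<Rightarrow> 'a) \<Rightarrow> ('x \<Rightarrow> 'a) \<Rightarrow> bool" where
  "m_boundary_tuple X ipX D A H ipH Hmp ipMP Hpm ipPM pr G0 G1 \<longleftrightarrow>
     (let DS = adj_dom X ipX D A; As = adj X ipX D A in
       mixed_order_duality H ipH Hmp ipMP Hpm ipPM pr
     \<and> clinear_on DS G0 \<and> clinear_on DS G1
     \<and> (\<forall>f\<in>DS. G0 f \<in> Hmp \<and> G1 f \<in> Hpm)
     \<and> (\<forall>a\<in>Hmp. \<forall>b\<in>Hpm. \<exists>f\<in>DS. G0 f = a \<and> G1 f = b)
     \<and> (\<forall>f\<in>DS. \<forall>g\<in>DS. ipX (As f) g - ipX f (As g)
           = cnj (pr (G0 g) (G1 f)) - pr (G0 f) (G1 g)))"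

definition boundary_triple ::
  "'x::cvector set \<Rightarrow> ('x \<Rightarrow> 'x \<Rightarrow> complex) \<Rightarrow> 'x set \<Rightarrow> ('x \<Rightarrow> 'x)
   \<Rightarrow> 'a::cvector set \<Rightarrow> ('a \<Rightarrow> 'a \<Rightarrow> complex) \<Rightarrow> ('x \<Rightarrow> 'a) \<Rightarrow> ('x \<Rightarrow> 'a) \<Rightarrow> bool" where
  "boundary_triple X ipX D A H ipH G0 G1 \<longleftrightarrow>
     (let DS = adj_dom X ipX D A; As = adj X ipX D A in
       clinear_on DS G0 \<and> clinear_on DS G1
     \<and> (\<forall>f\<in>DS. G0 f \<in> H \<and> G1 f \<in> H)
     \<and> (\<forall>a\<in>H. \<forall>b\<in>H. \<exists>f\<in>DS. G0 f = a \<and> G1 f = b)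
     \<and> (\<forall>f\<in>DS. \<forall>g\<in>DS. ipX (As f) g - ipX f (As g)
           = ipH (G1 f) (G0 g) - ipH (G0 f) (G1 g)))"

definition pairing_adjoint ::
  "'a::cvector set \<Rightarrow> ('a \<Rightarrow> 'a \<Rightarrow> complex) \<Rightarrow> ('a \<Rightarrow> 'a \<Rightarrow> complex) \<Rightarrow> ('a \<Rightarrow> 'a) \<Rightarrow> 'a \<Rightarrow> 'a" where
  "pairing_adjoint H ipH pr V g = (THE u. u \<in> H \<and> (\<forall>f\<in>H. pr (V f) g = ipH f u))"

end

theory Submission
  imports Defs
begin

lemma scaleC_zero_left[simp]: "(0::complex) *\<^sub>C (x::'a::cvector) = 0"
proof -
  have "(0::complex) *\<^sub>C x = 0 *\<^sub>C x + 0 *\<^sub>C x" using scaleC_add_left[of 0 0 x] by simp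
  then show ?thesis by simp
qed

lemma scaleC_zero_right[simp]: "c *\<^sub>C (0::'a::cvector) = 0"
proof -
  have "c *\<^sub>C (0::'a) = c *\<^sub>C 0 + c *\<^sub>C 0" using scaleC_add_right[of c 0 0] by simp
  then show ?thesis by simp
qed

lemma scaleC_minus1: "(-1::complex) *\<^sub>C (x::'a::cvector) = - x"
proof -
  have "(0::complex) *\<^sub>C x = 1 *\<^sub>C x + (-1) *\<^sub>C x" using scaleC_add_left[of 1 "-1" x] by simp
  then have "0 = x + (-1) *\<^sub>C x" by (simp add: scaleC_one)
  then show ?thesis by (metis add.commute add_minus_cancel add.right_neutral)
qed

lemma scaleC_diff_right: "c *\<^sub>C ((x::'a::cvector) - y) = c *\<^sub>C x - c *\<^sub>C y"
proof -
  have "c *\<^sub>C x = c *\<^sub>C (x - y) + c *\<^sub>C y" using scaleC_add_right[of c "x - y" y] by simp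
  then show ?thesis by simp
qed

lemma scaleC_half: "(1/2::complex) *\<^sub>C ((x::'a::cvector) + x) = x"
proof -
  have "(1/2::complex) *\<^sub>C (x + x) = (1/2 + 1/2) *\<^sub>C x" by (simp only: scaleC_add_right scaleC_add_left)
  then show ?thesis by (simp add: scaleC_one)
qed

lemma csubspace_minus: "csubspace S \<Longrightarrow> x \<in> S \<Longrightarrow> - x \<in> S"
  unfolding csubspace_def by (metis scaleC_minus1)

lemma csubspace_diff: "csubspace S \<Longrightarrow> x \<in> S \<Longrightarrow> y \<in> S \<Longrightarrow> x - y \<in> S"
  using csubspace_minus unfolding csubspace_def by (metis diff_conv_add_uminus)

locale ips =
  fixes S :: "'a::cvector set" and ip :: "'a \<Rightarrow> 'a \<Rightarrow> complex"
  assumes ipo: "inner_product_on S ip"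
begin

lemma sub: "csubspace S" using ipo unfolding inner_product_on_def by (elim conjE)
lemma sub': "0 \<in> S \<and> (\<forall>x\<in>S. \<forall>y\<in>S. x + y \<in> S) \<and> (\<forall>c. \<forall>x\<in>S. c *\<^sub>C x \<in> S)"
  using sub unfolding csubspace_def .
lemma zero_in[simp]: "0 \<in> S" using sub' by (elim conjE)
lemma add_in[intro]: "x \<in> S \<Longrightarrow> y \<in> S \<Longrightarrow> x + y \<in> S" using sub' by (elim conjE) (drule bspec, assumption, drule bspec, assumption)
lemma scale_in[intro]: "x \<in> S \<Longrightarrow> c *\<^sub>C x \<in> S" using sub' by (elim conjE) (drule spec, drule bspec, assumption)
lemma minus_in[intro]: "x \<in> S \<Longrightarrow> - x \<in> S" using sub csubspace_minus by blast
lemma diff_in[intro]: "x \<in> S \<Longrightarrow> y \<in> S \<Longrightarrow> x - y \<in> S" using sub csubspace_diff by blast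

lemma ipo_p1: "\<forall>x\<in>S. \<forall>y\<in>S. \<forall>z\<in>S. ip (x + y) z = ip x z + ip y z"
  using ipo unfolding inner_product_on_def by (elim conjE)
lemma ipo_p2: "\<forall>c. \<forall>x\<in>S. \<forall>y\<in>S. ip (c *\<^sub>C x) y = c * ip x y"
  using ipo unfolding inner_product_on_def by (elim conjE)
lemma ipo_p3: "\<forall>x\<in>S. \<forall>y\<in>S. ip y x = cnj (ip x y)"
  using ipo unfolding inner_product_on_def by (elim conjE)
lemma ipo_p4: "\<forall>x\<in>S. 0 \<le> Re (ip x x)"
  using ipo unfolding inner_product_on_def by (elim conjE)
lemma ipo_p5: "\<forall>x\<in>S. ip x x = 0 \<longrightarrow> x = 0"
  using ipo unfolding inner_product_on_def by (elim conjE)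

lemma ip_addL: "x \<in> S \<Longrightarrow> y \<in> S \<Longrightarrow> z \<in> S \<Longrightarrow> ip (x + y) z = ip x z + ip y z"
  using ipo_p1 by blast
lemma ip_scaleL: "x \<in> S \<Longrightarrow> y \<in> S \<Longrightarrow> ip (c *\<^sub>C x) y = c * ip x y"
  using ipo_p2 by blast
lemma ip_sym: "x \<in> S \<Longrightarrow> y \<in> S \<Longrightarrow> ip y x = cnj (ip x y)"
  using ipo_p3 by blast
lemma ip_pos: "x \<in> S \<Longrightarrow> 0 \<le> Re (ip x x)"
  using ipo_p4 by blast
lemma ip_def0: "x \<in> S \<Longrightarrow> ip x x = 0 \<Longrightarrow> x = 0"
  using ipo_p5 by blast

lemma ip_addR: "x \<in> S \<Longrightarrow> y \<in> S \<Longrightarrow> z \<in> S \<Longrightarrow> ip x (y + z) = ip x y + ip x z"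
proof -
  assume x: "x \<in> S" and y: "y \<in> S" and z: "z \<in> S"
  have "ip x (y + z) = cnj (ip (y + z) x)" using ip_sym[of "y + z" x] x y z add_in by blast
  also have "\<dots> = cnj (ip y x) + cnj (ip z x)" using ip_addL[OF y z x] by simp
  also have "\<dots> = ip x y + ip x z" using ip_sym[OF y x] ip_sym[OF z x] by simp
  finally show ?thesis .
qed
lemma ip_scaleR: "x \<in> S \<Longrightarrow> y \<in> S \<Longrightarrow> ip x (c *\<^sub>C y) = cnj c * ip x y"
proof -
  assume x: "x \<in> S" and y: "y \<in> S"
  have "ip x (c *\<^sub>C y) = cnj (ip (c *\<^sub>C y) x)" using ip_sym[of "c *\<^sub>C y" x] x y scale_in by blast
  also have "\<dots> = cnj c * cnj (ip y x)" using ip_scaleL[OF y x] by simp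
  also have "\<dots> = cnj c * ip x y" using ip_sym[OF y x] by simp
  finally show ?thesis .
qed
lemma ip_zeroL[simp]: "y \<in> S \<Longrightarrow> ip 0 y = 0"
  using ip_scaleL[of 0 y 0] by simp
lemma ip_zeroR[simp]: "y \<in> S \<Longrightarrow> ip y 0 = 0"
  using ip_scaleR[of y 0 0] by simp
lemma ip_diffL: "x \<in> S \<Longrightarrow> y \<in> S \<Longrightarrow> z \<in> S \<Longrightarrow> ip (x - y) z = ip x z - ip y z"
  using ip_addL[of "x - y" y z] by (simp add: diff_in)
lemma ip_diffR: "x \<in> S \<Longrightarrow> y \<in> S \<Longrightarrow> z \<in> S \<Longrightarrow> ip x (y - z) = ip x y - ip x z"
  using ip_addR[of x "y - z" z] by (simp add: diff_in)

lemma ip_self_real: "x \<in> S \<Longrightarrow> ip x x = complex_of_real (Re (ip x x))"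
proof -
  assume x: "x \<in> S"
  have "ip x x = cnj (ip x x)" using ip_sym[OF x x] .
  then have "Im (ip x x) = 0" by (metis cnj.sel(2) complex.expand minus_equation_iff neg_equal_zero)
  then show ?thesis by (simp add: complex_eq_iff)
qed

lemma hnorm_ge0: "x \<in> S \<Longrightarrow> 0 \<le> hnorm ip x" unfolding hnorm_def using ip_pos by simp
lemma hnorm_sq: assumes "x \<in> S" shows "(hnorm ip x)\<^sup>2 = Re (ip x x)"
  unfolding hnorm_def using ip_pos[OF assms] by simp
lemma ip_self: "x \<in> S \<Longrightarrow> ip x x = complex_of_real ((hnorm ip x)\<^sup>2)"
proof -
  assume x: "x \<in> S"
  show ?thesis using hnorm_sq[OF x] ip_self_real[OF x] by simp
qed
lemma hnorm_zero[simp]: "hnorm ip 0 = 0" unfolding hnorm_def by simp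
lemma hnorm_eq0: "x \<in> S \<Longrightarrow> hnorm ip x = 0 \<longleftrightarrow> x = 0"
proof
  assume x: "x \<in> S" and h: "hnorm ip x = 0"
  have "ip x x = 0" using ip_self[OF x] h by simp
  then show "x = 0" using ip_def0[OF x] by blast
qed simp
lemma hnorm_pos: "x \<in> S \<Longrightarrow> x \<noteq> 0 \<Longrightarrow> 0 < hnorm ip x"
  using hnorm_eq0[of x] hnorm_ge0[of x] by (simp add: order_le_less)

lemma cnj_sq: "c * cnj c = complex_of_real ((cmod c)\<^sup>2)"
  by (simp add: complex_mult_cnj cmod_power2)

lemma hnorm_scale: "x \<in> S \<Longrightarrow> hnorm ip (c *\<^sub>C x) = cmod c * hnorm ip x"
proof -
  assume x: "x \<in> S"
  have cx: "c *\<^sub>C x \<in> S" using x by blast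
  have "ip (c *\<^sub>C x) (c *\<^sub>C x) = c * (cnj c * ip x x)"
    using x cx by (simp add: ip_scaleL ip_scaleR)
  also have "\<dots> = (c * cnj c) * ip x x" by (simp add: mult.assoc)
  also have "\<dots> = complex_of_real ((cmod c)\<^sup>2 * (hnorm ip x)\<^sup>2)"
    unfolding cnj_sq ip_self[OF x] by simp
  finally have "Re (ip (c *\<^sub>C x) (c *\<^sub>C x)) = (cmod c * hnorm ip x)\<^sup>2"
    by (simp add: power_mult_distrib)
  then have "(hnorm ip (c *\<^sub>C x))\<^sup>2 = (cmod c * hnorm ip x)\<^sup>2"
    using hnorm_sq[OF cx] by simp
  moreover have "0 \<le> hnorm ip (c *\<^sub>C x)" using hnorm_ge0[OF cx] .
  moreover have "0 \<le> cmod c * hnorm ip x" using hnorm_ge0[OF x] by simp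
  ultimately show ?thesis using power2_eq_iff_nonneg by blast
qed

lemma hnorm_minus_commute: "x \<in> S \<Longrightarrow> y \<in> S \<Longrightarrow> hnorm ip (x - y) = hnorm ip (y - x)"
proof -
  assume "x \<in> S" "y \<in> S"
  then have "hnorm ip ((-1) *\<^sub>C (x - y)) = hnorm ip (x - y)" by (simp add: hnorm_scale diff_in)
  then show ?thesis by (simp add: scaleC_minus1)
qed

lemma expand_add: "x \<in> S \<Longrightarrow> y \<in> S \<Longrightarrow>
  (hnorm ip (x + y))\<^sup>2 = (hnorm ip x)\<^sup>2 + (hnorm ip y)\<^sup>2 + 2 * Re (ip x y)"
proof -
  assume x: "x \<in> S" and y: "y \<in> S"
  have "ip (x + y) (x + y) = ip x x + ip y y + ip x y + cnj (ip x y)"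
    using x y by (simp add: ip_addL ip_addR add_in ip_sym[of x y])
  then show ?thesis using x y hnorm_sq add_in by simp
qed

lemma expand_diff: "x \<in> S \<Longrightarrow> y \<in> S \<Longrightarrow>
  (hnorm ip (x - y))\<^sup>2 = (hnorm ip x)\<^sup>2 + (hnorm ip y)\<^sup>2 - 2 * Re (ip x y)"
proof -
  assume x: "x \<in> S" and y: "y \<in> S"
  have "ip (x - y) (x - y) = ip x x + ip y y - ip x y - cnj (ip x y)"
    using x y by (simp add: ip_diffL ip_diffR diff_in ip_sym[of x y])
  then show ?thesis using x y hnorm_sq diff_in by simp
qed

lemma cauchy_schwarz: "x \<in> S \<Longrightarrow> y \<in> S \<Longrightarrow> cmod (ip x y) \<le> hnorm ip x * hnorm ip y"
proof -
  assume x: "x \<in> S" and y: "y \<in> S"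
  show ?thesis
  proof (cases "y = 0")
    case True then show ?thesis using x hnorm_ge0[OF x] by simp
  next
    case False
    define r where "r = (hnorm ip y)\<^sup>2"
    have r: "r > 0" using hnorm_pos[OF y False] unfolding r_def by simp
    define a where "a = ip x y"
    define t where "t = a / complex_of_real r"
    have ty: "t *\<^sub>C y \<in> S" using y by blast
    have "0 \<le> (hnorm ip (x - t *\<^sub>C y))\<^sup>2" by simp
    also have "\<dots> = (hnorm ip x)\<^sup>2 + (cmod t * hnorm ip y)\<^sup>2 - 2 * Re (cnj t * a)"
      using expand_diff[OF x ty] x y by (simp add: hnorm_scale ip_scaleR a_def)
    also have "cnj t * a = complex_of_real ((cmod a)\<^sup>2 / r)"
    proof -
      have "cnj t * a = (a * cnj a) / complex_of_real r" unfolding t_def by (simp add: mult.commute)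
      then show ?thesis unfolding cnj_sq by simp
    qed
    also have "(cmod t * hnorm ip y)\<^sup>2 = (cmod a)\<^sup>2 / r"
    proof -
      have "cmod t = cmod a / r" unfolding t_def using r by (simp add: norm_divide)
      then have "(cmod t * hnorm ip y)\<^sup>2 = (cmod a)\<^sup>2 / r\<^sup>2 * r"
        by (simp add: power_mult_distrib power_divide r_def)
      then show ?thesis using r by (simp add: power2_eq_square)
    qed
    finally have "(cmod a)\<^sup>2 / r \<le> (hnorm ip x)\<^sup>2" by simp
    then have "(cmod a)\<^sup>2 \<le> (hnorm ip x)\<^sup>2 * r" using r by (simp add: divide_le_eq)
    then have "(cmod a)\<^sup>2 \<le> (hnorm ip x * hnorm ip y)\<^sup>2" by (simp add: r_def power_mult_distrib)
    moreover have "0 \<le> hnorm ip x * hnorm ip y" using hnorm_ge0[OF x] hnorm_ge0[OF y] by simp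
    ultimately show ?thesis unfolding a_def using power2_le_imp_le by blast
  qed
qed

lemma triangle: "x \<in> S \<Longrightarrow> y \<in> S \<Longrightarrow> hnorm ip (x + y) \<le> hnorm ip x + hnorm ip y"
proof -
  assume x: "x \<in> S" and y: "y \<in> S"
  have "Re (ip x y) \<le> hnorm ip x * hnorm ip y"
    using cauchy_schwarz[OF x y] complex_Re_le_cmod order_trans by blast
  then have "(hnorm ip (x + y))\<^sup>2 \<le> (hnorm ip x + hnorm ip y)\<^sup>2"
    using expand_add[OF x y] by (simp add: power2_sum)
  moreover have "0 \<le> hnorm ip x + hnorm ip y" using hnorm_ge0[OF x] hnorm_ge0[OF y] by simp
  ultimately show ?thesis using power2_le_imp_le by blast
qed

lemma triangle_diff: "x \<in> S \<Longrightarrow> y \<in> S \<Longrightarrow> z \<in> S \<Longrightarrow> hnorm ip (x - z) \<le> hnorm ip (x - y) + hnorm ip (y - z)"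
proof -
  assume "x \<in> S" "y \<in> S" "z \<in> S"
  then have "hnorm ip ((x - y) + (y - z)) \<le> hnorm ip (x - y) + hnorm ip (y - z)" using triangle diff_in by blast
  then show ?thesis by simp
qed

lemma parallelogram: "x \<in> S \<Longrightarrow> y \<in> S \<Longrightarrow>
  (hnorm ip (x + y))\<^sup>2 + (hnorm ip (x - y))\<^sup>2 = 2 * (hnorm ip x)\<^sup>2 + 2 * (hnorm ip y)\<^sup>2"
proof -
  assume "x \<in> S" "y \<in> S"
  then show ?thesis using expand_add[of x y] expand_diff[of x y] by simp
qed

lemma ip_unique: "u \<in> S \<Longrightarrow> u' \<in> S \<Longrightarrow> \<forall>x\<in>S. ip x u = ip x u' \<Longrightarrow> u = u'"
proof -
  assume u: "u \<in> S" and u': "u' \<in> S" and h: "\<forall>x\<in>S. ip x u = ip x u'"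
  have "ip (u - u') (u - u') = 0" using u u' h by (simp add: ip_diffR diff_in)
  then have "u - u' = 0" using ip_def0 u u' diff_in by blast
  then show ?thesis by simp
qed

end

locale hs = ips +
  assumes complete: "\<forall>u. (\<forall>n. u n \<in> S) \<and> hcauchy ip u \<longrightarrow> (\<exists>x\<in>S. hconverges ip u x)"
begin

lemma conv_cauchy:
  assumes u: "\<forall>n. u n \<in> S" and x: "x \<in> S" and c: "hconverges ip u x"
  shows "hcauchy ip u"
  unfolding hcauchy_def
proof (intro allI impI)
  fix e :: real assume e: "e > 0"
  have "(\<lambda>n. hnorm ip (u n - x)) \<longlonglongrightarrow> 0" using c unfolding hconverges_def .
  then have "\<forall>\<^sub>F n in sequentially. hnorm ip (u n - x) < e / 2"
    using e by (intro order_tendstoD(2)) auto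
  then obtain N where N: "\<And>n. n \<ge> N \<Longrightarrow> hnorm ip (u n - x) < e / 2"
    unfolding eventually_sequentially by blast
  show "\<exists>N. \<forall>m\<ge>N. \<forall>n\<ge>N. hnorm ip (u m - u n) < e"
  proof (intro exI allI impI)
    fix m n assume m: "m \<ge> N" and n: "n \<ge> N"
    have "hnorm ip (u m - u n) \<le> hnorm ip (u m - x) + hnorm ip (x - u n)"
      using triangle_diff u x by blast
    also have "hnorm ip (x - u n) = hnorm ip (u n - x)" using hnorm_minus_commute u x by blast
    finally show "hnorm ip (u m - u n) < e" using N[OF m] N[OF n] by simp
  qed
qed

lemma lim_zero:
  assumes "\<And>n. a \<le> b n" and "b \<longlonglongrightarrow> 0" shows "a \<le> (0::real)"
  using assms by (meson LIMSEQ_le_const)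

definition closed_in :: "'a set \<Rightarrow> bool" where
  "closed_in M \<longleftrightarrow> (\<forall>u x. (\<forall>n. u n \<in> M) \<and> x \<in> S \<and> hconverges ip u x \<longrightarrow> x \<in> M)"

lemma projection:
  assumes M: "csubspace M" "M \<subseteq> S" "closed_in M" and w: "w \<in> S"
  shows "\<exists>m\<in>M. \<forall>y\<in>M. ip (w - m) y = 0"
proof -
  have M0: "0 \<in> M" using M(1) unfolding csubspace_def by blast
  have Madd: "\<And>x y. x \<in> M \<Longrightarrow> y \<in> M \<Longrightarrow> x + y \<in> M" using M(1) unfolding csubspace_def by blast
  have Mscale: "\<And>x c. x \<in> M \<Longrightarrow> c *\<^sub>C x \<in> M" using M(1) unfolding csubspace_def by blast
  have Mdiff: "\<And>x y. x \<in> M \<Longrightarrow> y \<in> M \<Longrightarrow> x - y \<in> M" using M(1) csubspace_diff by blast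
  define F where "F = (\<lambda>y. hnorm ip (w - y)) ` M"
  define d where "d = Inf F"
  have Fne: "F \<noteq> {}" unfolding F_def using M0 by blast
  have Fbdd: "bdd_below F" unfolding F_def bdd_below_def using M(2) w
    by (intro exI[of _ 0]) (auto intro!: hnorm_ge0)
  have dle: "\<And>y. y \<in> M \<Longrightarrow> d \<le> hnorm ip (w - y)"
    unfolding d_def F_def using Fbdd F_def by (intro cInf_lower) auto
  have Fpos: "\<And>f. f \<in> F \<Longrightarrow> 0 \<le> f" unfolding F_def using M(2) w by (auto intro!: hnorm_ge0)
  have d0: "0 \<le> d" unfolding d_def using Fne Fpos by (intro cInf_greatest) auto
  have ex: "\<exists>y\<in>M. hnorm ip (w - y) < sqrt (d\<^sup>2 + inverse (real (Suc n)))" for n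
  proof -
    have "d < sqrt (d\<^sup>2 + inverse (real (Suc n)))"
    proof -
      have "sqrt (d\<^sup>2) < sqrt (d\<^sup>2 + inverse (real (Suc n)))" by (intro real_sqrt_less_mono) simp
      then show ?thesis using d0 by simp
    qed
    then obtain f where "f \<in> F" "f < sqrt (d\<^sup>2 + inverse (real (Suc n)))"
      using cInf_lessD[OF Fne] unfolding d_def by blast
    then show ?thesis unfolding F_def by blast
  qed
  then obtain y where y: "\<And>n. y n \<in> M" "\<And>n. hnorm ip (w - y n) < sqrt (d\<^sup>2 + inverse (real (Suc n)))"
    by metis
  have yS: "\<And>n. y n \<in> S" using y(1) M(2) by blast
  have ysq: "(hnorm ip (w - y n))\<^sup>2 \<le> d\<^sup>2 + inverse (real (Suc n))" for n
  proof -
    have "hnorm ip (w - y n) \<le> sqrt (d\<^sup>2 + inverse (real (Suc n)))" using y(2)[of n] by simp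
    then have "(hnorm ip (w - y n))\<^sup>2 \<le> (sqrt (d\<^sup>2 + inverse (real (Suc n))))\<^sup>2"
      using hnorm_ge0 w yS by (intro power_mono) auto
    then show ?thesis by simp
  qed
  have bound: "(hnorm ip (y n - y m))\<^sup>2 \<le> 2 * inverse (real (Suc n)) + 2 * inverse (real (Suc m))" for n m
  proof -
    define a where "a = w - y n"
    define b where "b = w - y m"
    have aS: "a \<in> S" and bS: "b \<in> S" unfolding a_def b_def using w yS by auto
    define mid where "mid = (1/2::complex) *\<^sub>C (y n + y m)"
    have midM: "mid \<in> M" unfolding mid_def using y(1) Madd Mscale by blast
    have "(1/2::complex) *\<^sub>C (a + b) = (1/2::complex) *\<^sub>C ((w + w) - (y n + y m))"
      unfolding a_def b_def by (simp add: algebra_simps)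
    also have "\<dots> = w - mid" unfolding mid_def scaleC_diff_right scaleC_half ..
    finally have ab: "(1/2::complex) *\<^sub>C (a + b) = w - mid" .
    have "hnorm ip (a + b) = 2 * hnorm ip ((1/2::complex) *\<^sub>C (a + b))"
      using aS bS by (simp add: hnorm_scale add_in)
    also have "\<dots> = 2 * hnorm ip (w - mid)" using ab by simp
    finally have "hnorm ip (a + b) \<ge> 2 * d" using dle[OF midM] by simp
    then have "(hnorm ip (a + b))\<^sup>2 \<ge> (2 * d)\<^sup>2" using d0 by (intro power_mono) auto
    moreover have "(hnorm ip (a + b))\<^sup>2 + (hnorm ip (a - b))\<^sup>2 = 2 * (hnorm ip a)\<^sup>2 + 2 * (hnorm ip b)\<^sup>2"
      using parallelogram[OF aS bS] .
    moreover have "a - b = y m - y n" unfolding a_def b_def by simp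
    moreover have "hnorm ip (y m - y n) = hnorm ip (y n - y m)" using hnorm_minus_commute yS by blast
    ultimately show ?thesis using ysq[of n] ysq[of m] unfolding a_def b_def
      by (simp add: power_mult_distrib)
  qed
  have cau: "hcauchy ip y"
    unfolding hcauchy_def
  proof (intro allI impI)
    fix e :: real assume e: "e > 0"
    obtain N where N: "inverse (real (Suc N)) < e\<^sup>2 / 4"
      using e reals_Archimedean by (metis divide_pos_pos zero_less_numeral zero_less_power)
    show "\<exists>N. \<forall>m\<ge>N. \<forall>n\<ge>N. hnorm ip (y m - y n) < e"
    proof (intro exI allI impI)
      fix m n assume m: "m \<ge> N" and n: "n \<ge> N"
      have im: "inverse (real (Suc m)) \<le> inverse (real (Suc N))" using m by (simp add: le_imp_inverse_le)
      have inn: "inverse (real (Suc n)) \<le> inverse (real (Suc N))" using n by (simp add: le_imp_inverse_le)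
      have "(hnorm ip (y m - y n))\<^sup>2 < e\<^sup>2" using bound[of m n] im inn N by linarith
      then show "hnorm ip (y m - y n) < e" using e by (simp add: power_less_imp_less_base)
    qed
  qed
  obtain m where mS: "m \<in> S" and mc: "hconverges ip y m" using complete yS cau by blast
  have mM: "m \<in> M" using M(3) y(1) mS mc unfolding closed_in_def by blast
  have lim: "(\<lambda>n. hnorm ip (y n - m)) \<longlonglongrightarrow> 0" using mc unfolding hconverges_def .
  have dm: "hnorm ip (w - m) \<le> d"
  proof -
    have le: "hnorm ip (w - m) \<le> sqrt (d\<^sup>2 + inverse (real (Suc n))) + hnorm ip (y n - m)" for n
      using triangle_diff[OF w yS mS, of n] y(2)[of n] by simp
    have "(\<lambda>n. sqrt (d\<^sup>2 + inverse (real (Suc n))) + hnorm ip (y n - m)) \<longlonglongrightarrow> sqrt (d\<^sup>2 + 0) + 0"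
      by (intro tendsto_intros LIMSEQ_inverse_real_of_nat lim)
    then have "(\<lambda>n. sqrt (d\<^sup>2 + inverse (real (Suc n))) + hnorm ip (y n - m)) \<longlonglongrightarrow> d"
      using d0 by simp
    then show ?thesis using le by (meson LIMSEQ_le_const)
  qed
  have emin: "hnorm ip (w - m) \<le> hnorm ip (w - m + t *\<^sub>C z)" if z: "z \<in> M" for z t
  proof -
    have "m - t *\<^sub>C z \<in> M" using mM z Mdiff Mscale by blast
    then have "d \<le> hnorm ip (w - (m - t *\<^sub>C z))" using dle by blast
    then show ?thesis using dm by (simp add: algebra_simps)
  qed
  show ?thesis
  proof (intro bexI[OF _ mM] ballI)
    fix z assume z: "z \<in> M"
    have zS: "z \<in> S" using z M(2) by blast
    define e where "e = w - m"
    have eS: "e \<in> S" unfolding e_def using w mS by blast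
    define a where "a = ip e z"
    define s where "s = 1 / ((hnorm ip z)\<^sup>2 + 1)"
    have p: "0 < (hnorm ip z)\<^sup>2 + 1" by (smt (verit) zero_le_power2)
    have s0: "s > 0" unfolding s_def using p by simp
    have s1: "s * (hnorm ip z)\<^sup>2 < 1" unfolding s_def using p by (simp add: divide_less_eq)
    define t where "t = - complex_of_real s * a"
    have tz: "t *\<^sub>C z \<in> S" using zS by blast
    have "(hnorm ip e)\<^sup>2 \<le> (hnorm ip (e + t *\<^sub>C z))\<^sup>2"
      using emin[OF z, of t] hnorm_ge0[OF eS] unfolding e_def by (intro power_mono) auto
    also have "\<dots> = (hnorm ip e)\<^sup>2 + (cmod t * hnorm ip z)\<^sup>2 + 2 * Re (cnj t * a)"
      using expand_add[OF eS tz] eS zS by (simp add: hnorm_scale ip_scaleR a_def)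
    also have "cnj t * a = - complex_of_real (s * (cmod a)\<^sup>2)"
    proof -
      have "cnj t * a = - complex_of_real s * (a * cnj a)" unfolding t_def by (simp add: mult_ac)
      then show ?thesis unfolding cnj_sq by simp
    qed
    also have "cmod t = s * cmod a" unfolding t_def using s0 by (simp add: norm_mult)
    finally have "0 \<le> (s * cmod a * hnorm ip z)\<^sup>2 - 2 * s * (cmod a)\<^sup>2" by simp
    then have "0 \<le> s * (cmod a)\<^sup>2 * (s * (hnorm ip z)\<^sup>2 - 2)"
      by (simp add: power_mult_distrib algebra_simps power2_eq_square)
    moreover have "s * (hnorm ip z)\<^sup>2 - 2 < 0" using s1 by simp
    ultimately have "s * (cmod a)\<^sup>2 \<le> 0" by (simp add: mult_le_0_iff zero_le_mult_iff)
    then have "(cmod a)\<^sup>2 \<le> 0" using s0 by (simp add: mult_le_0_iff)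
    then have "a = 0" by simp
    then show "ip (w - m) z = 0" unfolding a_def e_def .
  qed
qed

end

context hs begin

lemma riesz:
  assumes add: "\<And>x y. x \<in> S \<Longrightarrow> y \<in> S \<Longrightarrow> \<phi> (x + y) = \<phi> x + \<phi> y"
    and scl: "\<And>c x. x \<in> S \<Longrightarrow> \<phi> (c *\<^sub>C x) = c * \<phi> x"
    and bnd: "\<And>x. x \<in> S \<Longrightarrow> cmod (\<phi> x) \<le> K * hnorm ip x"
  shows "\<exists>u\<in>S. \<forall>x\<in>S. \<phi> x = ip x u"
proof -
  have phi0: "\<phi> 0 = 0" using scl[of 0 0] by simp
  have phidiff: "\<phi> (x - y) = \<phi> x - \<phi> y" if "x \<in> S" "y \<in> S" for x y
    using add[of "x - y" y] that diff_in by simp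
  define N where "N = {x\<in>S. \<phi> x = 0}"
  have Nsub: "csubspace N" unfolding csubspace_def N_def using phi0 add scl by auto
  have NS: "N \<subseteq> S" unfolding N_def by blast
  have Ncl: "closed_in N" unfolding closed_in_def
  proof (intro allI impI)
    fix u x assume h: "(\<forall>n. u n \<in> N) \<and> x \<in> S \<and> hconverges ip u x"
    then have uS: "\<And>n. u n \<in> S" and u0: "\<And>n. \<phi> (u n) = 0" and x: "x \<in> S"
      and lim: "(\<lambda>n. hnorm ip (u n - x)) \<longlonglongrightarrow> 0"
      unfolding N_def hconverges_def by auto
    have le: "cmod (\<phi> x) \<le> K * hnorm ip (u n - x)" for n
    proof -
      have "cmod (\<phi> x) = cmod (\<phi> (x - u n))" using phidiff[OF x uS] u0 by simp
      also have "\<dots> \<le> K * hnorm ip (x - u n)" using bnd x uS diff_in by blast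
      also have "hnorm ip (x - u n) = hnorm ip (u n - x)" using hnorm_minus_commute x uS by blast
      finally show ?thesis .
    qed
    have "(\<lambda>n. K * hnorm ip (u n - x)) \<longlonglongrightarrow> K * 0" by (intro tendsto_intros lim)
    then have "cmod (\<phi> x) \<le> K * 0" by (rule LIMSEQ_le_const) (use le in blast)
    then have "cmod (\<phi> x) \<le> 0" by simp
    then show "x \<in> N" unfolding N_def using x by simp
  qed
  show ?thesis
  proof (cases "\<forall>x\<in>S. \<phi> x = 0")
    case True
    then show ?thesis by (intro bexI[of _ 0]) auto
  next
    case False
    then obtain x0 where x0: "x0 \<in> S" "\<phi> x0 \<noteq> 0" by blast
    obtain m where mN: "m \<in> N" and orth: "\<forall>y\<in>N. ip (x0 - m) y = 0"
      using projection[OF Nsub NS Ncl x0(1)] by blast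
    define z where "z = x0 - m"
    have mS: "m \<in> S" using mN NS by blast
    have zS: "z \<in> S" unfolding z_def using x0 mS by blast
    have phiz: "\<phi> z = \<phi> x0" unfolding z_def using phidiff[OF x0(1) mS] mN unfolding N_def by simp
    have z0: "z \<noteq> 0" using phiz phi0 x0(2) by auto
    have izz: "ip z z \<noteq> 0" using ip_def0[OF zS] z0 by blast
    have izzr: "cnj (ip z z) = ip z z" using ip_sym[OF zS zS] by simp
    define u where "u = (cnj (\<phi> z) / ip z z) *\<^sub>C z"
    have uS: "u \<in> S" unfolding u_def using zS by blast
    show ?thesis
    proof (intro bexI[OF _ uS] ballI)
      fix x assume x: "x \<in> S"
      define q where "q = x - (\<phi> x / \<phi> z) *\<^sub>C z"
      have qS: "q \<in> S" unfolding q_def using x zS by blast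
      have "\<phi> q = \<phi> x - (\<phi> x / \<phi> z) * \<phi> z" unfolding q_def
        using phidiff[OF x, of "(\<phi> x / \<phi> z) *\<^sub>C z"] scl[OF zS, of "\<phi> x / \<phi> z"] scale_in[OF zS, of "\<phi> x / \<phi> z"] by simp
      also have "\<dots> = 0" using phiz x0(2) by simp
      finally have "q \<in> N" unfolding N_def using qS by blast
      then have "ip z q = 0" using orth unfolding z_def by blast
      then have "ip z x - cnj (\<phi> x / \<phi> z) * ip z z = 0"
        unfolding q_def using ip_diffR[OF zS x scale_in[OF zS, of "\<phi> x / \<phi> z"]] ip_scaleR[OF zS zS, of "\<phi> x / \<phi> z"]
        by simp
      then have "ip z x = cnj (\<phi> x / \<phi> z) * ip z z" by simp
      then have "ip x z = (\<phi> x / \<phi> z) * ip z z"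
        using ip_sym[OF zS x] izzr by simp
      then have "ip x u = (\<phi> z / ip z z) * ((\<phi> x / \<phi> z) * ip z z)"
        unfolding u_def using x zS izzr by (simp add: ip_scaleR)
      also have "\<dots> = \<phi> x" using izz phiz x0(2) by simp
      finally show "\<phi> x = ip x u" by simp
    qed
  qed
qed

end

lemma cont_bounded:
  assumes S: "inner_product_on S ip1" and T: "inner_product_on T ip2"
    and lin: "clinear_on S f" and img: "\<And>x. x \<in> S \<Longrightarrow> f x \<in> T"
    and cont: "hcontinuous_on S ip1 f ip2"
  shows "\<exists>K\<ge>0. \<forall>x\<in>S. hnorm ip2 (f x) \<le> K * hnorm ip1 x"
proof -
  interpret s: ips S ip1 using S by unfold_locales
  interpret t: ips T ip2 using T by unfold_locales
  have fadd: "\<And>x y. x \<in> S \<Longrightarrow> y \<in> S \<Longrightarrow> f (x + y) = f x + f y"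
    and fscl: "\<And>c x. x \<in> S \<Longrightarrow> f (c *\<^sub>C x) = c *\<^sub>C f x" using lin unfolding clinear_on_def by auto
  have f0: "f 0 = 0" using fscl[of 0 0] by simp
  obtain d where d: "d > 0" and dh: "\<And>y. y \<in> S \<Longrightarrow> hnorm ip1 (y - 0) < d \<Longrightarrow> hnorm ip2 (f y - f 0) < 1"
    using cont s.zero_in unfolding hcontinuous_on_def by (metis zero_less_one)
  show ?thesis
  proof (intro exI[of _ "2 / d"] conjI ballI)
    show "0 \<le> 2 / d" using d by simp
    fix y assume y: "y \<in> S"
    show "hnorm ip2 (f y) \<le> 2 / d * hnorm ip1 y"
    proof (cases "y = 0")
      case True then show ?thesis using f0 by simp
    next
      case False
      define ny where "ny = hnorm ip1 y"
      have ny: "ny > 0" unfolding ny_def using s.hnorm_pos[OF y False] .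
      define c where "c = d / (2 * ny)"
      have c: "c > 0" unfolding c_def using d ny by simp
      have y': "complex_of_real c *\<^sub>C y \<in> S" using y by blast
      have "hnorm ip1 (complex_of_real c *\<^sub>C y) = c * ny" unfolding ny_def using s.hnorm_scale[OF y] c by simp
      also have "\<dots> = d / 2" unfolding c_def using ny by simp
      finally have "hnorm ip1 (complex_of_real c *\<^sub>C y - 0) < d" using d by simp
      then have "hnorm ip2 (f (complex_of_real c *\<^sub>C y)) < 1" using dh[OF y'] f0 by simp
      then have "c * hnorm ip2 (f y) < 1" using fscl[OF y] t.hnorm_scale[OF img[OF y]] c by simp
      then have "hnorm ip2 (f y) < 1 / c" using c by (simp add: field_simps)
      also have "1 / c = 2 / d * ny" unfolding c_def using d ny by simp
      finally show ?thesis unfolding ny_def by simp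
    qed
  qed
qed

locale dual = H: hs H ipH + MP: hs Hmp ipMP + PM: hs Hpm ipPM
  for H :: "'a::cvector set" and ipH :: "'a \<Rightarrow> 'a \<Rightarrow> complex" and Hmp :: "'a set"
    and ipMP :: "'a \<Rightarrow> 'a \<Rightarrow> complex" and Hpm :: "'a set" and ipPM :: "'a \<Rightarrow> 'a \<Rightarrow> complex" +
  fixes pr :: "'a \<Rightarrow> 'a \<Rightarrow> complex" and C :: real
  assumes prAddL: "\<And>a a' b. a \<in> Hmp \<Longrightarrow> a' \<in> Hmp \<Longrightarrow> b \<in> Hpm \<Longrightarrow> pr (a + a') b = pr a b + pr a' b"
    and prScL: "\<And>c a b. a \<in> Hmp \<Longrightarrow> b \<in> Hpm \<Longrightarrow> pr (c *\<^sub>C a) b = c * pr a b"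
    and prAddR: "\<And>a b b'. a \<in> Hmp \<Longrightarrow> b \<in> Hpm \<Longrightarrow> b' \<in> Hpm \<Longrightarrow> pr a (b + b') = pr a b + pr a b'"
    and prScR: "\<And>c a b. a \<in> Hmp \<Longrightarrow> b \<in> Hpm \<Longrightarrow> pr a (c *\<^sub>C b) = cnj c * pr a b"
    and C0le: "C \<ge> 0"
    and prBd: "\<And>a b. a \<in> Hmp \<Longrightarrow> b \<in> Hpm \<Longrightarrow> cmod (pr a b) \<le> C * (hnorm ipMP a * hnorm ipPM b)"
    and agree: "\<And>a b. a \<in> H \<Longrightarrow> a \<in> Hmp \<Longrightarrow> b \<in> H \<Longrightarrow> b \<in> Hpm \<Longrightarrow> pr a b = ipH a b"
    and dMP: "hdense Hmp ipMP (H \<inter> Hmp)" and dPM: "hdense Hpm ipPM (H \<inter> Hpm)"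
    and ndA: "norm_dual H ipH Hmp ipMP Hpm ipPM" and ndB: "norm_dual H ipH Hpm ipPM Hmp ipMP"
begin

lemma prDiffL: "a \<in> Hmp \<Longrightarrow> a' \<in> Hmp \<Longrightarrow> b \<in> Hpm \<Longrightarrow> pr (a - a') b = pr a b - pr a' b"
  using prAddL[of "a - a'" a' b] MP.diff_in by simp

lemma Jex: "g \<in> Hpm \<Longrightarrow> \<exists>w\<in>Hmp. \<forall>h\<in>Hmp. pr h g = ipMP h w"
proof -
  assume g: "g \<in> Hpm"
  show ?thesis
  proof (rule MP.riesz[where K = "C * hnorm ipPM g"])
    fix x y assume "x \<in> Hmp" "y \<in> Hmp"
    then show "pr (x + y) g = pr x g + pr y g" using prAddL g by simp
  next
    fix c x assume "x \<in> Hmp"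
    then show "pr (c *\<^sub>C x) g = c * pr x g" using prScL g by simp
  next
    fix x assume x: "x \<in> Hmp"
    show "cmod (pr x g) \<le> C * hnorm ipPM g * hnorm ipMP x" using prBd[OF x g] by (simp add: mult_ac)
  qed
qed

definition J where "J g = (SOME w. w \<in> Hmp \<and> (\<forall>h\<in>Hmp. pr h g = ipMP h w))"

lemma Jprop: assumes g: "g \<in> Hpm" shows "J g \<in> Hmp \<and> (\<forall>h\<in>Hmp. pr h g = ipMP h (J g))"
proof -
  have "\<exists>w. w \<in> Hmp \<and> (\<forall>h\<in>Hmp. pr h g = ipMP h w)" using Jex[OF g] by blast
  then show ?thesis unfolding J_def by (rule someI_ex)
qed

lemma JH: "g \<in> Hpm \<Longrightarrow> J g \<in> Hmp" using Jprop by simp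
lemma Jrep: "g \<in> Hpm \<Longrightarrow> h \<in> Hmp \<Longrightarrow> pr h g = ipMP h (J g)" using Jprop by simp

lemma Jadd: assumes a: "a \<in> Hpm" and b: "b \<in> Hpm" shows "J (a + b) = J a + J b"
proof (rule MP.ip_unique)
  show "J (a + b) \<in> Hmp" using JH a b PM.add_in by blast
  show "J a + J b \<in> Hmp" using JH a b MP.add_in by blast
  show "\<forall>x\<in>Hmp. ipMP x (J (a + b)) = ipMP x (J a + J b)"
  proof
    fix x assume x: "x \<in> Hmp"
    have "ipMP x (J (a + b)) = pr x (a + b)" using Jrep[OF PM.add_in[OF a b] x] by simp
    also have "\<dots> = pr x a + pr x b" using prAddR[OF x a b] .
    also have "\<dots> = ipMP x (J a) + ipMP x (J b)" using Jrep[OF a x] Jrep[OF b x] by simp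
    also have "\<dots> = ipMP x (J a + J b)" using MP.ip_addR[OF x JH[OF a] JH[OF b]] by simp
    finally show "ipMP x (J (a + b)) = ipMP x (J a + J b)" .
  qed
qed

lemma Jscl: assumes a: "a \<in> Hpm" shows "J (c *\<^sub>C a) = c *\<^sub>C J a"
proof (rule MP.ip_unique)
  show "J (c *\<^sub>C a) \<in> Hmp" using JH a PM.scale_in by blast
  show "c *\<^sub>C J a \<in> Hmp" using JH a MP.scale_in by blast
  show "\<forall>x\<in>Hmp. ipMP x (J (c *\<^sub>C a)) = ipMP x (c *\<^sub>C J a)"
  proof
    fix x assume x: "x \<in> Hmp"
    have "ipMP x (J (c *\<^sub>C a)) = pr x (c *\<^sub>C a)" using Jrep[OF PM.scale_in[OF a] x] by simp
    also have "\<dots> = cnj c * pr x a" using prScR[OF x a] .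
    also have "\<dots> = ipMP x (c *\<^sub>C J a)" using Jrep[OF a x] MP.ip_scaleR[OF x JH[OF a]] by simp
    finally show "ipMP x (J (c *\<^sub>C a)) = ipMP x (c *\<^sub>C J a)" .
  qed
qed

lemma Jdiff: assumes a: "a \<in> Hpm" and b: "b \<in> Hpm" shows "J (a - b) = J a - J b"
  using Jadd[OF PM.diff_in[OF a b] b] by simp

lemma J0: "J 0 = 0" using Jscl[OF PM.zero_in, of 0] by simp

lemma Jbound: assumes g: "g \<in> Hpm" shows "hnorm ipMP (J g) \<le> C * hnorm ipPM g"
proof (cases "hnorm ipMP (J g) = 0")
  case True then show ?thesis using C0le PM.hnorm_ge0[OF g] by simp
next
  case False
  have jg: "J g \<in> Hmp" using JH[OF g] .
  have "(hnorm ipMP (J g))\<^sup>2 = Re (ipMP (J g) (J g))" using MP.hnorm_sq[OF jg] .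
  also have "\<dots> = Re (pr (J g) g)" using Jrep[OF g jg] by simp
  also have "\<dots> \<le> cmod (pr (J g) g)" by (rule complex_Re_le_cmod)
  also have "\<dots> \<le> C * (hnorm ipMP (J g) * hnorm ipPM g)" using prBd[OF jg g] .
  finally have "hnorm ipMP (J g) * hnorm ipMP (J g) \<le> hnorm ipMP (J g) * (C * hnorm ipPM g)"
    by (simp add: power2_eq_square mult_ac)
  moreover have "hnorm ipMP (J g) > 0" using False MP.hnorm_ge0[OF jg] by simp
  ultimately show ?thesis by simp
qed

lemma Jlower0: assumes g: "g \<in> H" "g \<in> Hpm" shows "hnorm ipPM g \<le> hnorm ipMP (J g)"
proof -
  define F where "F = (\<lambda>h. cmod (ipH h g) / hnorm ipMP h) ` ((H \<inter> Hmp) - {0})"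
  have eq: "hnorm ipPM g = Sup (insert 0 F)" using ndA g unfolding norm_dual_def F_def by blast
  have "Sup (insert 0 F) \<le> hnorm ipMP (J g)"
  proof (rule cSup_least)
    show "insert 0 F \<noteq> {}" by simp
    fix x assume "x \<in> insert 0 F"
    then show "x \<le> hnorm ipMP (J g)"
    proof
      assume "x = 0" then show ?thesis using MP.hnorm_ge0[OF JH[OF g(2)]] by simp
    next
      assume "x \<in> F"
      then obtain h where h: "h \<in> H" "h \<in> Hmp" "h \<noteq> 0" and xh: "x = cmod (ipH h g) / hnorm ipMP h"
        unfolding F_def by blast
      have hp: "hnorm ipMP h > 0" using MP.hnorm_pos h by blast
      have "cmod (ipH h g) = cmod (ipMP h (J g))" using agree[OF h(1,2) g] Jrep[OF g(2) h(2)] by simp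
      also have "\<dots> \<le> hnorm ipMP h * hnorm ipMP (J g)" using MP.cauchy_schwarz[OF h(2) JH[OF g(2)]] .
      finally show ?thesis unfolding xh using hp by (simp add: divide_le_eq mult.commute)
    qed
  qed
  then show ?thesis using eq by simp
qed

lemma Jlower: assumes g: "g \<in> Hpm" shows "hnorm ipPM g \<le> hnorm ipMP (J g)"
proof (rule field_le_epsilon)
  fix e :: real assume e: "e > 0"
  have e': "e / (C + 1) > 0" using e C0le by simp
  obtain g' where g': "g' \<in> H \<inter> Hpm" "hnorm ipPM (g - g') < e / (C + 1)"
    using dPM g e' unfolding hdense_def by blast
  have g'H: "g' \<in> H" and g'P: "g' \<in> Hpm" using g' by auto
  have "hnorm ipPM g \<le> hnorm ipPM (g - g') + hnorm ipPM g'"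
    using PM.triangle_diff[OF g g'P PM.zero_in] by simp
  also have "hnorm ipPM g' \<le> hnorm ipMP (J g')" using Jlower0[OF g'H g'P] .
  also have "hnorm ipMP (J g') \<le> hnorm ipMP (J g' - J g) + hnorm ipMP (J g)"
    using MP.triangle_diff[OF JH[OF g'P] JH[OF g] MP.zero_in] by simp
  also have "hnorm ipMP (J g' - J g) \<le> C * hnorm ipPM (g' - g)"
    using Jbound[OF PM.diff_in[OF g'P g]] Jdiff[OF g'P g] by simp
  also have "hnorm ipPM (g' - g) = hnorm ipPM (g - g')" using PM.hnorm_minus_commute g g'P by blast
  finally have "hnorm ipPM g \<le> hnorm ipMP (J g) + (C + 1) * hnorm ipPM (g - g')" by (simp add: algebra_simps)
  also have "(C + 1) * hnorm ipPM (g - g') \<le> (C + 1) * (e / (C + 1))"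
    using g'(2) C0le by (intro mult_left_mono) auto
  also have "(C + 1) * (e / (C + 1)) = e" using C0le by simp
  finally show "hnorm ipPM g \<le> hnorm ipMP (J g) + e" by simp
qed

lemma annihil: assumes z: "z \<in> Hmp" and zz: "\<And>g. g \<in> Hpm \<Longrightarrow> pr z g = 0" shows "z = 0"
proof -
  have "hnorm ipMP z \<le> 0"
  proof (rule field_le_epsilon)
    fix e :: real assume e: "e > 0"
    have e': "e / (C + 1) > 0" using e C0le by simp
    obtain z' where z': "z' \<in> H \<inter> Hmp" "hnorm ipMP (z - z') < e / (C + 1)"
      using dMP z e' unfolding hdense_def by blast
    have z'H: "z' \<in> H" and z'M: "z' \<in> Hmp" using z' by auto
    define F where "F = (\<lambda>g. cmod (ipH g z') / hnorm ipPM g) ` ((H \<inter> Hpm) - {0})"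
    have eq: "hnorm ipMP z' = Sup (insert 0 F)" using ndB z'H z'M unfolding norm_dual_def F_def by blast
    have dz: "hnorm ipMP (z' - z) = hnorm ipMP (z - z')" using MP.hnorm_minus_commute z z'M by blast
    have "Sup (insert 0 F) \<le> C * hnorm ipMP (z - z')"
    proof (rule cSup_least)
      show "insert 0 F \<noteq> {}" by simp
      fix x assume "x \<in> insert 0 F"
      then show "x \<le> C * hnorm ipMP (z - z')"
      proof
        assume "x = 0" then show ?thesis using C0le MP.hnorm_ge0[OF MP.diff_in[OF z z'M]] by simp
      next
        assume "x \<in> F"
        then obtain g where g: "g \<in> H" "g \<in> Hpm" "g \<noteq> 0" and xg: "x = cmod (ipH g z') / hnorm ipPM g"
          unfolding F_def by blast
        have gp: "hnorm ipPM g > 0" using PM.hnorm_pos g by blast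
        have "ipH g z' = cnj (ipH z' g)" using H.ip_sym[OF z'H g(1)] .
        then have "cmod (ipH g z') = cmod (pr z' g)" using agree[OF z'H z'M g(1,2)] by simp
        also have "pr z' g = pr (z' - z) g" using prDiffL[OF z'M z g(2)] zz[OF g(2)] by simp
        also have "cmod (pr (z' - z) g) \<le> C * (hnorm ipMP (z' - z) * hnorm ipPM g)"
          using prBd[OF MP.diff_in[OF z'M z] g(2)] .
        finally have "cmod (ipH g z') \<le> (C * hnorm ipMP (z - z')) * hnorm ipPM g" using dz by (simp add: mult_ac)
        then show ?thesis unfolding xg using gp by (simp add: divide_le_eq)
      qed
    qed
    then have "hnorm ipMP z' \<le> C * hnorm ipMP (z - z')" using eq by simp
    moreover have "hnorm ipMP z \<le> hnorm ipMP (z - z') + hnorm ipMP z'"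
      using MP.triangle_diff[OF z z'M MP.zero_in] by simp
    ultimately have "hnorm ipMP z \<le> (C + 1) * hnorm ipMP (z - z')" by (simp add: algebra_simps)
    also have "(C + 1) * hnorm ipMP (z - z') \<le> (C + 1) * (e / (C + 1))"
      using z'(2) C0le by (intro mult_left_mono) auto
    also have "(C + 1) * (e / (C + 1)) = e" using C0le by simp
    finally show "hnorm ipMP z \<le> 0 + e" by simp
  qed
  then have "hnorm ipMP z = 0" using MP.hnorm_ge0[OF z] by simp
  then show ?thesis using MP.hnorm_eq0[OF z] by simp
qed

end

context dual begin

lemma Rsub: "csubspace (J ` Hpm)"
  unfolding csubspace_def
proof (intro conjI ballI allI)
  show "0 \<in> J ` Hpm" using J0 PM.zero_in by (metis image_eqI)
next
  fix x y assume "x \<in> J ` Hpm" "y \<in> J ` Hpm"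
  then obtain a b where "a \<in> Hpm" "b \<in> Hpm" "x = J a" "y = J b" by blast
  then show "x + y \<in> J ` Hpm" using Jadd PM.add_in by (metis image_eqI)
next
  fix c x assume "x \<in> J ` Hpm"
  then obtain a where "a \<in> Hpm" "x = J a" by blast
  then show "c *\<^sub>C x \<in> J ` Hpm" using Jscl PM.scale_in by (metis image_eqI)
qed

lemma RS: "J ` Hpm \<subseteq> Hmp" using JH by blast

lemma Rcl: "MP.closed_in (J ` Hpm)"
  unfolding MP.closed_in_def
proof (intro allI impI)
  fix u x assume h: "(\<forall>n. u n \<in> J ` Hpm) \<and> x \<in> Hmp \<and> hconverges ipMP u x"
  then have x: "x \<in> Hmp" and uc: "hconverges ipMP u x" by auto
  have "\<forall>n. \<exists>g. g \<in> Hpm \<and> u n = J g" using h by blast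
  then obtain gs where gs: "\<And>n. gs n \<in> Hpm" "\<And>n. u n = J (gs n)" by metis
  have uH: "\<And>n. u n \<in> Hmp" using gs JH by simp
  have ucau: "hcauchy ipMP u" using MP.conv_cauchy[of u x] uH x uc by blast
  have gcau: "hcauchy ipPM gs"
    unfolding hcauchy_def
  proof (intro allI impI)
    fix e :: real assume e: "e > 0"
    obtain N where N: "\<forall>m\<ge>N. \<forall>n\<ge>N. hnorm ipMP (u m - u n) < e" using ucau e unfolding hcauchy_def by blast
    show "\<exists>N. \<forall>m\<ge>N. \<forall>n\<ge>N. hnorm ipPM (gs m - gs n) < e"
    proof (intro exI allI impI)
      fix m n assume "m \<ge> N" "n \<ge> N"
      then have "hnorm ipMP (u m - u n) < e" using N by blast
      moreover have "hnorm ipPM (gs m - gs n) \<le> hnorm ipMP (J (gs m - gs n))"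
        using Jlower PM.diff_in gs(1) by blast
      moreover have "J (gs m - gs n) = u m - u n" using Jdiff gs by simp
      ultimately show "hnorm ipPM (gs m - gs n) < e" by simp
    qed
  qed
  obtain g where g: "g \<in> Hpm" and gc: "hconverges ipPM gs g" using PM.complete gs(1) gcau by blast
  have glim: "(\<lambda>n. hnorm ipPM (gs n - g)) \<longlonglongrightarrow> 0" using gc unfolding hconverges_def .
  have ulim: "(\<lambda>n. hnorm ipMP (u n - x)) \<longlonglongrightarrow> 0" using uc unfolding hconverges_def .
  have le: "hnorm ipMP (J g - x) \<le> C * hnorm ipPM (gs n - g) + hnorm ipMP (u n - x)" for n
  proof -
    have "hnorm ipMP (J g - x) \<le> hnorm ipMP (J g - u n) + hnorm ipMP (u n - x)"
      using MP.triangle_diff[OF JH[OF g] uH x] .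
    also have "J g - u n = J (g - gs n)" using Jdiff[OF g gs(1)] gs(2) by simp
    also have "hnorm ipMP (J (g - gs n)) \<le> C * hnorm ipPM (g - gs n)" using Jbound PM.diff_in g gs(1) by blast
    also have "hnorm ipPM (g - gs n) = hnorm ipPM (gs n - g)" using PM.hnorm_minus_commute g gs(1) by blast
    finally show ?thesis by simp
  qed
  have "(\<lambda>n. C * hnorm ipPM (gs n - g) + hnorm ipMP (u n - x)) \<longlonglongrightarrow> C * 0 + 0"
    by (intro tendsto_intros glim ulim)
  then have "hnorm ipMP (J g - x) \<le> C * 0 + 0" by (rule LIMSEQ_le_const) (use le in blast)
  then have "hnorm ipMP (J g - x) = 0" using MP.hnorm_ge0[OF MP.diff_in[OF JH[OF g] x]] by simp
  then have "J g - x = 0" using MP.hnorm_eq0[OF MP.diff_in[OF JH[OF g] x]] by simp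
  then have "x = J g" by simp
  then show "x \<in> J ` Hpm" using g by blast
qed

lemma Jsurj: assumes w: "w \<in> Hmp" shows "\<exists>g\<in>Hpm. J g = w"
proof -
  obtain m where m: "m \<in> J ` Hpm" and orth: "\<forall>y\<in>J ` Hpm. ipMP (w - m) y = 0"
    using MP.projection[OF Rsub RS Rcl w] by blast
  obtain g0 where g0: "g0 \<in> Hpm" "m = J g0" using m by blast
  have mM: "m \<in> Hmp" using JH g0 by simp
  have z: "w - m \<in> Hmp" using w mM by blast
  have "w - m = 0"
  proof (rule annihil[OF z])
    fix g assume g: "g \<in> Hpm"
    have "pr (w - m) g = ipMP (w - m) (J g)" using Jrep[OF g z] .
    also have "\<dots> = 0" using orth g by blast
    finally show "pr (w - m) g = 0" .
  qed
  then show ?thesis using g0 by (intro bexI[of _ g0]) auto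
qed

lemma dual_surj: assumes w: "w \<in> Hmp" shows "\<exists>g\<in>Hpm. \<forall>h\<in>Hmp. pr h g = ipMP h w"
  using Jsurj[OF w] Jrep by blast

end

lemma hs_I: assumes "hilbert_space S ip" shows "hs S ip"
  using assms unfolding hilbert_space_def hs_def hs_axioms_def ips_def by simp

theorem proposition6p2:
  fixes X :: "'x::cvector set" and ipX :: "'x \<Rightarrow> 'x \<Rightarrow> complex"
    and D :: "'x set" and A :: "'x \<Rightarrow> 'x"
    and H Hmp Hpm :: "'a::cvector set" and ipH ipMP ipPM pr :: "'a \<Rightarrow> 'a \<Rightarrow> complex"
    and G0 G1 :: "'x \<Rightarrow> 'a" and V :: "'a \<Rightarrow> 'a"
  assumes "hilbert_space X ipX"
    and "closed_densely_defined_symmetric X ipX D A"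
    and "m_boundary_tuple X ipX D A H ipH Hmp ipMP Hpm ipPM pr G0 G1"
    and "linear_homeomorphism H ipH Hmp ipMP V"
  shows "boundary_triple X ipX D A H ipH
           (\<lambda>f. inv_into H V (G0 f)) (\<lambda>f. pairing_adjoint H ipH pr V (G1 f))"
proof -
  define DS where "DS = adj_dom X ipX D A"
  define As where "As = adj X ipX D A"
  note mb = assms(3)[unfolded m_boundary_tuple_def Let_def, folded DS_def As_def]
  have MOD: "mixed_order_duality H ipH Hmp ipMP Hpm ipPM pr" using mb by (elim conjE)
  have G0lin: "clinear_on DS G0" using mb by (elim conjE)
  have G1lin: "clinear_on DS G1" using mb by (elim conjE)
  have G01: "\<forall>f\<in>DS. G0 f \<in> Hmp \<and> G1 f \<in> Hpm" using mb by (elim conjE)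
  have surjM: "\<forall>a\<in>Hmp. \<forall>b\<in>Hpm. \<exists>f\<in>DS. G0 f = a \<and> G1 f = b" using mb by (elim conjE)
  have green: "\<forall>f\<in>DS. \<forall>g\<in>DS. ipX (As f) g - ipX f (As g)
           = cnj (pr (G0 g) (G1 f)) - pr (G0 f) (G1 g)" using mb by (elim conjE)
  note md = MOD[unfolded mixed_order_duality_def]
  have hH: "hilbert_space H ipH" using md by (elim conjE)
  have hMP: "hilbert_space Hmp ipMP" using md by (elim conjE)
  have hPM: "hilbert_space Hpm ipPM" using md by (elim conjE)
  have dMP: "hdense Hmp ipMP (H \<inter> Hmp)" using md by (elim conjE)
  have dPM: "hdense Hpm ipPM (H \<inter> Hpm)" using md by (elim conjE)
  have ndA: "norm_dual H ipH Hmp ipMP Hpm ipPM" using md by (elim conjE)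
  have ndB: "norm_dual H ipH Hpm ipPM Hmp ipMP" using md by (elim conjE)
  have prAddL': "\<forall>a\<in>Hmp. \<forall>a'\<in>Hmp. \<forall>b\<in>Hpm. pr (a + a') b = pr a b + pr a' b" using md by (elim conjE)
  have prScL': "\<forall>c. \<forall>a\<in>Hmp. \<forall>b\<in>Hpm. pr (c *\<^sub>C a) b = c * pr a b" using md by (elim conjE)
  have prAddR': "\<forall>a\<in>Hmp. \<forall>b\<in>Hpm. \<forall>b'\<in>Hpm. pr a (b + b') = pr a b + pr a b'" using md by (elim conjE)
  have prScR': "\<forall>c. \<forall>a\<in>Hmp. \<forall>b\<in>Hpm. pr a (c *\<^sub>C b) = cnj c * pr a b" using md by (elim conjE)
  have prB: "\<exists>C. \<forall>a\<in>Hmp. \<forall>b\<in>Hpm. cmod (pr a b) \<le> C * hnorm ipMP a * hnorm ipPM b" using md by (elim conjE)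
  have agree': "\<forall>a\<in>H \<inter> Hmp. \<forall>b\<in>H \<inter> Hpm. pr a b = ipH a b" using md by (elim conjE)
  interpret H: hs H ipH using hs_I[OF hH] .
  interpret MP: hs Hmp ipMP using hs_I[OF hMP] .
  interpret PM: hs Hpm ipPM using hs_I[OF hPM] .
  have prAddL: "\<And>a a' b. a \<in> Hmp \<Longrightarrow> a' \<in> Hmp \<Longrightarrow> b \<in> Hpm \<Longrightarrow> pr (a + a') b = pr a b + pr a' b"
    using prAddL' by blast
  have prScL: "\<And>c a b. a \<in> Hmp \<Longrightarrow> b \<in> Hpm \<Longrightarrow> pr (c *\<^sub>C a) b = c * pr a b"
    using prScL' by blast
  have prAddR: "\<And>a b b'. a \<in> Hmp \<Longrightarrow> b \<in> Hpm \<Longrightarrow> b' \<in> Hpm \<Longrightarrow> pr a (b + b') = pr a b + pr a b'"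
    using prAddR' by blast
  have prScR: "\<And>c a b. a \<in> Hmp \<Longrightarrow> b \<in> Hpm \<Longrightarrow> pr a (c *\<^sub>C b) = cnj c * pr a b"
    using prScR' by blast
  have agree: "\<And>a b. a \<in> H \<Longrightarrow> a \<in> Hmp \<Longrightarrow> b \<in> H \<Longrightarrow> b \<in> Hpm \<Longrightarrow> pr a b = ipH a b"
    using agree' by blast
  have prDiffL: "\<And>a a' b. a \<in> Hmp \<Longrightarrow> a' \<in> Hmp \<Longrightarrow> b \<in> Hpm \<Longrightarrow> pr (a - a') b = pr a b - pr a' b"
  proof -
    fix a a' b assume "a \<in> Hmp" "a' \<in> Hmp" "b \<in> Hpm"
    then show "pr (a - a') b = pr a b - pr a' b" using prAddL[of "a - a'" a' b] MP.diff_in by simp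
  qed
  obtain C0 where C0: "\<And>a b. a \<in> Hmp \<Longrightarrow> b \<in> Hpm \<Longrightarrow> cmod (pr a b) \<le> C0 * hnorm ipMP a * hnorm ipPM b"
    using prB by blast
  define C where "C = \<bar>C0\<bar>"
  have C0le: "C \<ge> 0" unfolding C_def by simp
  have prBd: "\<And>a b. a \<in> Hmp \<Longrightarrow> b \<in> Hpm \<Longrightarrow> cmod (pr a b) \<le> C * (hnorm ipMP a * hnorm ipPM b)"
  proof -
    fix a b assume a: "a \<in> Hmp" and b: "b \<in> Hpm"
    have "0 \<le> hnorm ipMP a * hnorm ipPM b" using MP.hnorm_ge0[OF a] PM.hnorm_ge0[OF b] by simp
    then have "C0 * (hnorm ipMP a * hnorm ipPM b) \<le> C * (hnorm ipMP a * hnorm ipPM b)"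
      unfolding C_def by (intro mult_right_mono) auto
    then show "cmod (pr a b) \<le> C * (hnorm ipMP a * hnorm ipPM b)" using C0[OF a b] by (simp add: mult.assoc)
  qed
  note lh = assms(4)[unfolded linear_homeomorphism_def]
  define W where "W = inv_into H V"
  have Vlin: "clinear_on H V" using lh by (elim conjE)
  have bij: "bij_betw V H Hmp" using lh by (elim conjE)
  have Vcont: "hcontinuous_on H ipH V ipMP" using lh by (elim conjE)
  have Wcont: "hcontinuous_on Hmp ipMP W ipH" using lh unfolding W_def by (elim conjE)
  have Vadd: "\<And>x y. x \<in> H \<Longrightarrow> y \<in> H \<Longrightarrow> V (x + y) = V x + V y"
    and Vscl: "\<And>c x. x \<in> H \<Longrightarrow> V (c *\<^sub>C x) = c *\<^sub>C V x" using Vlin unfolding clinear_on_def by auto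
  have VH: "\<And>x. x \<in> H \<Longrightarrow> V x \<in> Hmp" using bij_betw_apply[OF bij] .
  have WH: "\<And>w. w \<in> Hmp \<Longrightarrow> W w \<in> H" unfolding W_def using bij_betw_apply[OF bij_betw_inv_into[OF bij]] .
  have VW: "\<And>w. w \<in> Hmp \<Longrightarrow> V (W w) = w" unfolding W_def using bij_betw_inv_into_right[OF bij] .
  have WV: "\<And>x. x \<in> H \<Longrightarrow> W (V x) = x" unfolding W_def using bij_betw_inv_into_left[OF bij] .
  have Wadd: "\<And>a b. a \<in> Hmp \<Longrightarrow> b \<in> Hmp \<Longrightarrow> W (a + b) = W a + W b"
  proof -
    fix a b assume a: "a \<in> Hmp" and b: "b \<in> Hmp"
    have "V (W a + W b) = a + b" using Vadd[OF WH[OF a] WH[OF b]] VW[OF a] VW[OF b] by simp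
    then have "W (V (W a + W b)) = W (a + b)" by simp
    then show "W (a + b) = W a + W b" using WV[OF H.add_in[OF WH[OF a] WH[OF b]]] by simp
  qed
  have Wscl: "\<And>c a. a \<in> Hmp \<Longrightarrow> W (c *\<^sub>C a) = c *\<^sub>C W a"
  proof -
    fix c a assume a: "a \<in> Hmp"
    have "V (c *\<^sub>C W a) = c *\<^sub>C a" using Vscl[OF WH[OF a]] VW[OF a] by simp
    then have "W (V (c *\<^sub>C W a)) = W (c *\<^sub>C a)" by simp
    then show "W (c *\<^sub>C a) = c *\<^sub>C W a" using WV[OF H.scale_in[OF WH[OF a]]] by simp
  qed
  have Wlin: "clinear_on Hmp W" unfolding clinear_on_def using Wadd Wscl by blast
  obtain KV where KV: "KV \<ge> 0" "\<And>x. x \<in> H \<Longrightarrow> hnorm ipMP (V x) \<le> KV * hnorm ipH x"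
    using cont_bounded[OF H.ipo MP.ipo Vlin VH Vcont] by blast
  obtain KW where KW: "KW \<ge> 0" "\<And>x. x \<in> Hmp \<Longrightarrow> hnorm ipH (W x) \<le> KW * hnorm ipMP x"
    using cont_bounded[OF MP.ipo H.ipo Wlin WH Wcont] by blast
  define P where "P = pairing_adjoint H ipH pr V"
  have Pex: "\<exists>u\<in>H. \<forall>f\<in>H. pr (V f) g = ipH f u" if g: "g \<in> Hpm" for g
  proof (rule H.riesz[where K = "C * KV * hnorm ipPM g"])
    fix x y assume "x \<in> H" "y \<in> H"
    then show "pr (V (x + y)) g = pr (V x) g + pr (V y) g" using Vadd prAddL VH g by simp
  next
    fix c x assume "x \<in> H"
    then show "pr (V (c *\<^sub>C x)) g = c * pr (V x) g" using Vscl prScL VH g by simp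
  next
    fix x assume x: "x \<in> H"
    have "cmod (pr (V x) g) \<le> C * (hnorm ipMP (V x) * hnorm ipPM g)" using prBd[OF VH[OF x] g] .
    also have "\<dots> \<le> C * ((KV * hnorm ipH x) * hnorm ipPM g)"
      using KV(2)[OF x] PM.hnorm_ge0[OF g] C0le by (intro mult_left_mono mult_right_mono) auto
    finally show "cmod (pr (V x) g) \<le> C * KV * hnorm ipPM g * hnorm ipH x" by (simp add: mult_ac)
  qed
  have Pprop: "P g \<in> H \<and> (\<forall>f\<in>H. pr (V f) g = ipH f (P g))" if g: "g \<in> Hpm" for g
  proof -
    obtain u where u: "u \<in> H" "\<forall>f\<in>H. pr (V f) g = ipH f u" using Pex[OF g] by blast
    have "P g = u" unfolding P_def pairing_adjoint_def
    proof (rule the_equality)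
      show "u \<in> H \<and> (\<forall>f\<in>H. pr (V f) g = ipH f u)" using u by blast
    next
      fix u' assume h: "u' \<in> H \<and> (\<forall>f\<in>H. pr (V f) g = ipH f u')"
      have "\<forall>f\<in>H. ipH f u' = ipH f u"
      proof
        fix f assume "f \<in> H"
        then have "pr (V f) g = ipH f u'" "pr (V f) g = ipH f u" using h u(2) by blast+
        then show "ipH f u' = ipH f u" by simp
      qed
      then show "u' = u" using H.ip_unique[of u' u] u(1) h by blast
    qed
    then show ?thesis using u by simp
  qed
  have PH: "\<And>g. g \<in> Hpm \<Longrightarrow> P g \<in> H" using Pprop by simp
  have Prep: "\<And>g f. g \<in> Hpm \<Longrightarrow> f \<in> H \<Longrightarrow> pr (V f) g = ipH f (P g)" using Pprop by simp
  have DU: "dual H ipH Hmp ipMP Hpm ipPM pr C"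
    apply (rule dual.intro[OF hs_I[OF hH] hs_I[OF hMP] hs_I[OF hPM]])
    apply (rule dual_axioms.intro)
    using prAddL apply blast
    using prScL apply blast
    using prAddR apply blast
    using prScR apply blast
    using C0le apply blast
    using prBd apply blast
    using agree apply blast
    using dMP apply blast
    using dPM apply blast
    using ndA apply blast
    using ndB apply blast
    done
  have Padd: "P (a + b) = P a + P b" if a: "a \<in> Hpm" and b: "b \<in> Hpm" for a b
  proof (rule H.ip_unique)
    show "P (a + b) \<in> H" using PH PM.add_in[OF a b] by blast
    show "P a + P b \<in> H" using PH a b H.add_in by blast
    show "\<forall>x\<in>H. ipH x (P (a + b)) = ipH x (P a + P b)"
    proof
      fix x assume x: "x \<in> H"
      have "ipH x (P (a + b)) = pr (V x) (a + b)" using Prep[OF PM.add_in[OF a b] x] by simp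
      also have "\<dots> = pr (V x) a + pr (V x) b" using prAddR[OF VH[OF x] a b] .
      also have "\<dots> = ipH x (P a) + ipH x (P b)" using Prep[OF a x] Prep[OF b x] by simp
      also have "\<dots> = ipH x (P a + P b)" using H.ip_addR[OF x PH[OF a] PH[OF b]] by simp
      finally show "ipH x (P (a + b)) = ipH x (P a + P b)" .
    qed
  qed
  have Pscl: "P (c *\<^sub>C a) = c *\<^sub>C P a" if a: "a \<in> Hpm" for a c
  proof (rule H.ip_unique)
    show "P (c *\<^sub>C a) \<in> H" using PH PM.scale_in[OF a] by blast
    show "c *\<^sub>C P a \<in> H" using PH a H.scale_in by blast
    show "\<forall>x\<in>H. ipH x (P (c *\<^sub>C a)) = ipH x (c *\<^sub>C P a)"
    proof
      fix x assume x: "x \<in> H"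
      have "ipH x (P (c *\<^sub>C a)) = pr (V x) (c *\<^sub>C a)" using Prep[OF PM.scale_in[OF a] x] by simp
      also have "\<dots> = cnj c * pr (V x) a" using prScR[OF VH[OF x] a] .
      also have "\<dots> = ipH x (c *\<^sub>C P a)" using Prep[OF a x] H.ip_scaleR[OF x PH[OF a]] by simp
      finally show "ipH x (P (c *\<^sub>C a)) = ipH x (c *\<^sub>C P a)" .
    qed
  qed
  have G0add: "\<And>x y. x \<in> DS \<Longrightarrow> y \<in> DS \<Longrightarrow> G0 (x + y) = G0 x + G0 y"
    and G0scl: "\<And>c x. x \<in> DS \<Longrightarrow> G0 (c *\<^sub>C x) = c *\<^sub>C G0 x" using G0lin unfolding clinear_on_def by auto
  have G1add: "\<And>x y. x \<in> DS \<Longrightarrow> y \<in> DS \<Longrightarrow> G1 (x + y) = G1 x + G1 y"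
    and G1scl: "\<And>c x. x \<in> DS \<Longrightarrow> G1 (c *\<^sub>C x) = c *\<^sub>C G1 x" using G1lin unfolding clinear_on_def by auto
  have G0M: "\<And>f. f \<in> DS \<Longrightarrow> G0 f \<in> Hmp" using G01 by blast
  have G1P: "\<And>f. f \<in> DS \<Longrightarrow> G1 f \<in> Hpm" using G01 by blast
  have L0: "clinear_on DS (\<lambda>f. W (G0 f))"
    unfolding clinear_on_def using G0add G0scl Wadd Wscl G0M by simp
  have L1: "clinear_on DS (\<lambda>f. P (G1 f))"
    unfolding clinear_on_def using G1add G1scl Padd Pscl G1P by simp
  have MEM: "\<forall>f\<in>DS. W (G0 f) \<in> H \<and> P (G1 f) \<in> H" using WH G0M PH G1P by blast
  have SURJ: "\<forall>a\<in>H. \<forall>b\<in>H. \<exists>f\<in>DS. W (G0 f) = a \<and> P (G1 f) = b"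
  proof (intro ballI)
    fix a b assume a: "a \<in> H" and b: "b \<in> H"
    have "\<exists>w\<in>Hmp. \<forall>h\<in>Hmp. ipH (W h) b = ipMP h w"
    proof (rule MP.riesz[where K = "KW * hnorm ipH b"])
      fix x y assume "x \<in> Hmp" "y \<in> Hmp"
      then show "ipH (W (x + y)) b = ipH (W x) b + ipH (W y) b" using Wadd WH H.ip_addL b by simp
    next
      fix c x assume "x \<in> Hmp"
      then show "ipH (W (c *\<^sub>C x)) b = c * ipH (W x) b" using Wscl WH H.ip_scaleL b by simp
    next
      fix x assume x: "x \<in> Hmp"
      have "cmod (ipH (W x) b) \<le> hnorm ipH (W x) * hnorm ipH b" using H.cauchy_schwarz[OF WH[OF x] b] .
      also have "\<dots> \<le> (KW * hnorm ipMP x) * hnorm ipH b"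
        using KW(2)[OF x] H.hnorm_ge0[OF b] by (intro mult_right_mono) auto
      finally show "cmod (ipH (W x) b) \<le> KW * hnorm ipH b * hnorm ipMP x" by (simp add: mult_ac)
    qed
    then obtain w where w: "w \<in> Hmp" "\<And>h. h \<in> Hmp \<Longrightarrow> ipH (W h) b = ipMP h w" by blast
    obtain g where g: "g \<in> Hpm" "\<And>h. h \<in> Hmp \<Longrightarrow> pr h g = ipMP h w"
      using dual.dual_surj[OF DU w(1)] by blast
    have Pg: "P g = b"
    proof (rule H.ip_unique[OF PH[OF g(1)] b])
      show "\<forall>x\<in>H. ipH x (P g) = ipH x b"
      proof
        fix x assume x: "x \<in> H"
        have "ipH x (P g) = pr (V x) g" using Prep[OF g(1) x] by simp
        also have "\<dots> = ipMP (V x) w" using g(2)[OF VH[OF x]] .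
        also have "\<dots> = ipH (W (V x)) b" using w(2)[OF VH[OF x]] by simp
        also have "\<dots> = ipH x b" using WV[OF x] by simp
        finally show "ipH x (P g) = ipH x b" .
      qed
    qed
    obtain f where f: "f \<in> DS" "G0 f = V a" "G1 f = g" using surjM VH[OF a] g(1) by blast
    show "\<exists>f\<in>DS. W (G0 f) = a \<and> P (G1 f) = b"
    proof (rule bexI[OF _ f(1)])
      show "W (G0 f) = a \<and> P (G1 f) = b" using f(2,3) WV[OF a] Pg by simp
    qed
  qed
  have GREEN: "\<forall>f\<in>DS. \<forall>g\<in>DS. ipX (As f) g - ipX f (As g)
           = ipH (P (G1 f)) (W (G0 g)) - ipH (W (G0 f)) (P (G1 g))"
  proof (intro ballI)
    fix f g assume f: "f \<in> DS" and g: "g \<in> DS"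
    have e1: "ipH (W (G0 f)) (P (G1 g)) = pr (G0 f) (G1 g)"
      using Prep[OF G1P[OF g] WH[OF G0M[OF f]]] VW[OF G0M[OF f]] by simp
    have e2: "ipH (W (G0 g)) (P (G1 f)) = pr (G0 g) (G1 f)"
      using Prep[OF G1P[OF f] WH[OF G0M[OF g]]] VW[OF G0M[OF g]] by simp
    have e3: "ipH (P (G1 f)) (W (G0 g)) = cnj (pr (G0 g) (G1 f))"
      using H.ip_sym[OF WH[OF G0M[OF g]] PH[OF G1P[OF f]]] e2 by simp
    show "ipX (As f) g - ipX f (As g) = ipH (P (G1 f)) (W (G0 g)) - ipH (W (G0 f)) (P (G1 g))"
      using green f g e1 e3 by simp
  qed
  show ?thesis
    unfolding boundary_triple_def Let_def DS_def[symmetric] As_def[symmetric] W_def[symmetric] P_def[symmetric]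
    using L0 L1 MEM SURJ GREEN by blast
qed

end
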